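(* Let $X$ be a rack and let $\mathcal T_2=\{0,1\}$ be the trivial rack on two elements. Then the pair $(X,\mathcal T_2)$ is productive, i.e. the homomorphism $\Gamma'_{X\times\mathcal T_2}\to\Gamma'_X\times\Gamma'_{\mathcal T_2}$ induced on commutator subgroups by the natural homomorphism $\Gamma_{X\times\mathcal T_2}\to\Gamma_X\times\Gamma_{\mathcal T_2}$ is injective.
   Context: A rack is a set $X$ with an operation $x^y$ such that $x\mapsto x^y$ is bijective for each $y$ and $(z^x)^y=(z^y)^{x^y}$. The trivial rack $\mathcal T_2$ has $a^b=a$. The product rack $X\times Y$ has $(x,a)^{(y,b)}=(x^y,a^b)$. The structure group is $\Gamma_X=\langle X\mid y^{-1}xy=x^y\text{ for all }x,y\in X\rangle$, functorial in rack morphisms; $\Gamma'$ denotes the commutator subgroup. *)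

theory Defs
  imports "HOL-Algebra.Algebra"
begin

text \<open>A rack on the carrier set S with operation rop, where rop x y stands for x^y.\<close>
definition is_rack :: "'a set \<Rightarrow> ('a \<Rightarrow> 'a \<Rightarrow> 'a) \<Rightarrow> bool" where
  "is_rack S rop \<longleftrightarrow>
     (\<forall>x\<in>S. \<forall>y\<in>S. rop x y \<in> S) \<and>
     (\<forall>y\<in>S. bij_betw (\<lambda>x. rop x y) S S) \<and>
     (\<forall>x\<in>S. \<forall>y\<in>S. \<forall>z\<in>S. rop (rop z x) y = rop (rop z y) (rop x y))"

text \<open>The trivial rack T_2 on two elements (carrier UNIV :: bool set).\<close>
definition triv_op :: "bool \<Rightarrow> bool \<Rightarrow> bool" where
  "triv_op a b = a"

definition prod_op :: "('a \<Rightarrow> 'a \<Rightarrow> 'a) \<Rightarrow> ('b \<Rightarrow> 'b \<Rightarrow> 'b) \<Rightarrow>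
    ('a \<times> 'b) \<Rightarrow> ('a \<times> 'b) \<Rightarrow> ('a \<times> 'b)" where
  "prod_op rop1 rop2 p q = (rop1 (fst p) (fst q), rop2 (snd p) (snd q))"

text \<open>Words in the generators: a letter (x, True) is the generator x, (x, False) its inverse.\<close>
definition words :: "'a set \<Rightarrow> ('a \<times> bool) list set" where
  "words S = {w. set (map fst w) \<subseteq> S}"

text \<open>The congruence on words defining the presentation
  \<langle>S | y^-1 x y = x^y\<rangle>: the equivalence relation generated by free
  cancellation and the rack relations, inserted anywhere in a word.\<close>
inductive sg_rel :: "'a set \<Rightarrow> ('a \<Rightarrow> 'a \<Rightarrow> 'a) \<Rightarrow> ('a \<times> bool) list \<Rightarrow> ('a \<times> bool) list \<Rightarrow> bool"
  for S rop where
  sg_refl: "w \<in> words S \<Longrightarrow> sg_rel S rop w w"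
| sg_sym: "sg_rel S rop v w \<Longrightarrow> sg_rel S rop w v"
| sg_trans: "sg_rel S rop u v \<Longrightarrow> sg_rel S rop v w \<Longrightarrow> sg_rel S rop u w"
| sg_cancel: "u \<in> words S \<Longrightarrow> v \<in> words S \<Longrightarrow> x \<in> S \<Longrightarrow>
     sg_rel S rop (u @ [(x, b), (x, \<not> b)] @ v) (u @ v)"
| sg_rack: "u \<in> words S \<Longrightarrow> v \<in> words S \<Longrightarrow> x \<in> S \<Longrightarrow> y \<in> S \<Longrightarrow>
     sg_rel S rop (u @ [(y, False), (x, True), (y, True)] @ v) (u @ [(rop x y, True)] @ v)"

definition sg_class :: "'a set \<Rightarrow> ('a \<Rightarrow> 'a \<Rightarrow> 'a) \<Rightarrow> ('a \<times> bool) list \<Rightarrow> ('a \<times> bool) list set" where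
  "sg_class S rop w = {v. sg_rel S rop w v}"

definition structure_group :: "'a set \<Rightarrow> ('a \<Rightarrow> 'a \<Rightarrow> 'a) \<Rightarrow> ('a \<times> bool) list set monoid" where
  "structure_group S rop =
     \<lparr> carrier = sg_class S rop ` words S,
       monoid.mult = (\<lambda>A B. {v. \<exists>a\<in>A. \<exists>b\<in>B. sg_rel S rop (a @ b) v}),
       monoid.one = sg_class S rop [] \<rparr>"

text \<open>The natural map Gamma_{S x T2} -> Gamma_X x Gamma_{T2}, induced by the two
  projection rack morphisms (applied letterwise to representing words).\<close>
definition natural_map :: "'a set \<Rightarrow> ('a \<Rightarrow> 'a \<Rightarrow> 'a) \<Rightarrow> 'b set \<Rightarrow> ('b \<Rightarrow> 'b \<Rightarrow> 'b) \<Rightarrow>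
    (('a \<times> 'b) \<times> bool) list set \<Rightarrow> ('a \<times> bool) list set \<times> ('b \<times> bool) list set" where
  "natural_map S rop1 Y rop2 A =
     the_elem ((\<lambda>w. (sg_class S rop1 (map (\<lambda>(p, e). (fst p, e)) w),
                     sg_class Y rop2 (map (\<lambda>(p, e). (snd p, e)) w))) ` A)"

end

theory Submission
  imports Defs
begin

lemma words_Nil[simp]: "[] \<in> words S" by (simp add: words_def)
lemma words_Cons[simp]: "(l # w \<in> words S) \<longleftrightarrow> fst l \<in> S \<and> w \<in> words S"
  by (auto simp: words_def)
lemma words_append[simp]: "(u @ w \<in> words S) \<longleftrightarrow> u \<in> words S \<and> w \<in> words S"
  by (auto simp: words_def)

definition winv :: "('a \<times> bool) list \<Rightarrow> ('a \<times> bool) list" where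
  "winv w = rev (map (\<lambda>(x, e). (x, \<not> e)) w)"

lemma winv_Nil[simp]: "winv [] = []" by (simp add: winv_def)
lemma winv_Cons[simp]: "winv (l # w) = winv w @ [(fst l, \<not> snd l)]"
  by (cases l) (simp add: winv_def)
lemma winv_append[simp]: "winv (u @ w) = winv w @ winv u" by (simp add: winv_def)
lemma winv_words[simp]: "(winv w \<in> words S) = (w \<in> words S)" by (induction w) auto

definition lmap :: "('a \<Rightarrow> 'b) \<Rightarrow> ('a \<times> bool) list \<Rightarrow> ('b \<times> bool) list" where
  "lmap f w = map (apfst f) w"

lemma lmap_simps[simp]: "lmap f [] = []" "lmap f (l # w) = (f (fst l), snd l) # lmap f w"
  "lmap f (u @ w) = lmap f u @ lmap f w"
  by (auto simp: lmap_def apfst_def map_prod_def split: prod.splits)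

lemma lmap_winv[simp]: "lmap f (winv w) = winv (lmap f w)"
  by (induction w) auto

lemma lmap_words: "f ` S \<subseteq> T \<Longrightarrow> w \<in> words S \<Longrightarrow> lmap f w \<in> words T"
  by (induction w) auto

lemma lmap_comp: "lmap f (lmap g w) = lmap (f \<circ> g) w"
  by (induction w) auto

lemma sg_rel_morph:
  assumes "sg_rel S rop v w" "f ` S \<subseteq> T" "\<And>x y. x \<in> S \<Longrightarrow> y \<in> S \<Longrightarrow> f (rop x y) = rop' (f x) (f y)"
  shows "sg_rel T rop' (lmap f v) (lmap f w)"
  using assms(1)
proof (induction rule: sg_rel.induct)
  case (sg_refl w) then show ?case using assms lmap_words sg_rel.sg_refl by metis
next
  case (sg_sym v w) then show ?case by (blast intro: sg_rel.sg_sym)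
next
  case (sg_trans u v w) then show ?case by (blast intro: sg_rel.sg_trans)
next
  case (sg_cancel u v x b)
  have "lmap f u \<in> words T" "lmap f v \<in> words T" "f x \<in> T" using sg_cancel assms(2) lmap_words by blast+
  then have "sg_rel T rop' (lmap f u @ [(f x, b), (f x, \<not> b)] @ lmap f v) (lmap f u @ lmap f v)"
    by (rule sg_rel.sg_cancel)
  then show ?case by simp
next
  case (sg_rack u v x y)
  have "lmap f u \<in> words T" "lmap f v \<in> words T" "f x \<in> T" "f y \<in> T" using sg_rack assms(2) lmap_words by blast+
  then have "sg_rel T rop' (lmap f u @ [(f y, False), (f x, True), (f y, True)] @ lmap f v) (lmap f u @ [(rop' (f x) (f y), True)] @ lmap f v)"
    by (rule sg_rel.sg_rack)
  moreover have "f (rop x y) = rop' (f x) (f y)" using sg_rack assms(3) by blast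
  ultimately show ?case by simp
qed

locale rclosed =
  fixes S :: "'a set" and rop :: "'a \<Rightarrow> 'a \<Rightarrow> 'a"
  assumes closed: "\<And>x y. x \<in> S \<Longrightarrow> y \<in> S \<Longrightarrow> rop x y \<in> S"
begin

abbreviation R where "R \<equiv> sg_rel S rop"
abbreviation cls where "cls \<equiv> sg_class S rop"
abbreviation GG where "GG \<equiv> structure_group S rop"

lemma rel_words: "R v w \<Longrightarrow> v \<in> words S \<and> w \<in> words S"
  by (induction rule: sg_rel.induct) (auto simp: closed)

lemma rel_app_r: "R v w \<Longrightarrow> u \<in> words S \<Longrightarrow> R (v @ u) (w @ u)"
proof (induction rule: sg_rel.induct)
  case (sg_refl w) then show ?case by (simp add: sg_rel.sg_refl)
next
  case (sg_sym v w) then show ?case by (blast intro: sg_rel.sg_sym)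
next
  case (sg_trans u v w) then show ?case by (blast intro: sg_rel.sg_trans)
next
  case (sg_cancel u' v x b)
  then show ?case using sg_rel.sg_cancel[of u' S "v @ u" x rop b] by simp
next
  case (sg_rack u' v x y)
  then show ?case using sg_rel.sg_rack[of u' S "v @ u" x y rop] by simp
qed

lemma rel_app_l: "R v w \<Longrightarrow> u \<in> words S \<Longrightarrow> R (u @ v) (u @ w)"
proof (induction rule: sg_rel.induct)
  case (sg_refl w) then show ?case by (simp add: sg_rel.sg_refl)
next
  case (sg_sym v w) then show ?case by (blast intro: sg_rel.sg_sym)
next
  case (sg_trans u v w) then show ?case by (blast intro: sg_rel.sg_trans)
next
  case (sg_cancel u' v x b)
  then show ?case using sg_rel.sg_cancel[of "u @ u'" S v x rop b] by simp
next
  case (sg_rack u' v x y)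
  then show ?case using sg_rel.sg_rack[of "u @ u'" S v x y rop] by simp
qed

lemma rel_app: "R a a' \<Longrightarrow> R b b' \<Longrightarrow> R (a @ b) (a' @ b')"
proof -
  assume h: "R a a'" "R b b'"
  have "R (a @ b) (a' @ b)" using h rel_app_r rel_words by blast
  moreover have "R (a' @ b) (a' @ b')" using h rel_app_l rel_words by blast
  ultimately show ?thesis by (rule sg_rel.sg_trans)
qed

lemma cls_eq: "v \<in> words S \<Longrightarrow> cls v = cls w \<longleftrightarrow> R v w"
proof
  assume v: "v \<in> words S" and "cls v = cls w"
  have "R v v" using v by (rule sg_rel.sg_refl)
  then have "v \<in> cls v" by (simp add: sg_class_def)
  then have "v \<in> cls w" using \<open>cls v = cls w\<close> by simp
  then have "R w v" by (simp add: sg_class_def)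
  then show "R v w" by (rule sg_rel.sg_sym)
next
  assume "R v w"
  then show "cls v = cls w" unfolding sg_class_def
    by (auto intro: sg_rel.sg_trans sg_rel.sg_sym)
qed

lemma cls_mem: "v \<in> words S \<Longrightarrow> v \<in> cls v"
  by (simp add: sg_class_def sg_rel.sg_refl)

lemma carrier_GG: "carrier GG = cls ` words S" by (simp add: structure_group_def)
lemma one_GG: "one GG = cls []" by (simp add: structure_group_def)

lemma mult_cls: "a \<in> words S \<Longrightarrow> b \<in> words S \<Longrightarrow> cls a \<otimes>\<^bsub>GG\<^esub> cls b = cls (a @ b)"
proof -
  assume ab: "a \<in> words S" "b \<in> words S"
  have "{v. \<exists>a'\<in>cls a. \<exists>b'\<in>cls b. R (a' @ b') v} = cls (a @ b)"
  proof (rule equalityI; rule subsetI)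
    fix v assume "v \<in> {v. \<exists>a'\<in>cls a. \<exists>b'\<in>cls b. R (a' @ b') v}"
    then obtain a' b' where "R a a'" "R b b'" "R (a' @ b') v" by (auto simp: sg_class_def)
    then have "R (a @ b) v" using rel_app sg_rel.sg_trans by metis
    then show "v \<in> cls (a @ b)" by (simp add: sg_class_def)
  next
    fix v assume "v \<in> cls (a @ b)"
    then have "R (a @ b) v" by (simp add: sg_class_def)
    moreover have "a \<in> cls a" "b \<in> cls b" using ab cls_mem by auto
    ultimately show "v \<in> {v. \<exists>a'\<in>cls a. \<exists>b'\<in>cls b. R (a' @ b') v}" by blast
  qed
  then show ?thesis by (simp add: structure_group_def)
qed

lemma winv_cancel: "w \<in> words S \<Longrightarrow> R (winv w @ w) []"
proof (induction w)
  case Nil then show ?case by (simp add: sg_rel.sg_refl)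
next
  case (Cons l w)
  obtain x e where l: "l = (x, e)" by force
  have "R (winv w @ [(x, \<not> e), (x, \<not>\<not> e)] @ w) (winv w @ w)"
    using Cons l by (intro sg_rel.sg_cancel) auto
  then show ?case using Cons l by (auto intro: sg_rel.sg_trans)
qed

lemma winv_winv[simp]: "winv (winv w) = w" by (simp add: winv_def rev_map comp_def case_prod_beta)

lemma group_GG: "group GG"
proof (rule groupI)
  fix x y assume "x \<in> carrier GG" "y \<in> carrier GG"
  then show "x \<otimes>\<^bsub>GG\<^esub> y \<in> carrier GG" by (auto simp: carrier_GG mult_cls)
next
  show "one GG \<in> carrier GG" by (auto simp: carrier_GG one_GG)
next
  fix x y z assume "x \<in> carrier GG" "y \<in> carrier GG" "z \<in> carrier GG"
  then show "x \<otimes>\<^bsub>GG\<^esub> y \<otimes>\<^bsub>GG\<^esub> z = x \<otimes>\<^bsub>GG\<^esub> (y \<otimes>\<^bsub>GG\<^esub> z)" by (auto simp: carrier_GG mult_cls)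
next
  fix x assume "x \<in> carrier GG"
  then show "one GG \<otimes>\<^bsub>GG\<^esub> x = x" by (auto simp: carrier_GG one_GG mult_cls)
next
  fix x assume "x \<in> carrier GG"
  then obtain w where w: "w \<in> words S" "x = cls w" by (auto simp: carrier_GG)
  then have "cls (winv w) \<otimes>\<^bsub>GG\<^esub> x = one GG"
    by (simp add: mult_cls one_GG cls_eq winv_cancel)
  then show "\<exists>y\<in>carrier GG. y \<otimes>\<^bsub>GG\<^esub> x = one GG" using w by (auto simp: carrier_GG)
qed

lemma inv_cls: "w \<in> words S \<Longrightarrow> inv\<^bsub>GG\<^esub> (cls w) = cls (winv w)"
  by (intro group.inv_equality[OF group_GG]) (auto simp: mult_cls one_GG cls_eq winv_cancel carrier_GG)

end


definition central :: "('g, 'b) monoid_scheme \<Rightarrow> 'g \<Rightarrow> bool" where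
  "central G C \<longleftrightarrow> C \<in> carrier G \<and> (\<forall>y\<in>carrier G. C \<otimes>\<^bsub>G\<^esub> y = y \<otimes>\<^bsub>G\<^esub> C)"

context group
begin

lemma cancel_l: "x \<in> carrier G \<Longrightarrow> y \<in> carrier G \<Longrightarrow> x \<otimes> (inv x \<otimes> y) = y"
  by (simp add: m_assoc[symmetric])

lemma cancel_l2: "x \<in> carrier G \<Longrightarrow> y \<in> carrier G \<Longrightarrow> inv x \<otimes> (x \<otimes> y) = y"
  by (simp add: m_assoc[symmetric])

lemma central_one: "central G \<one>" by (simp add: central_def)

lemma central_mult: "central G C \<Longrightarrow> central G D \<Longrightarrow> central G (C \<otimes> D)"
proof -
  assume c: "central G C" "central G D"
  have CD: "C \<in> carrier G" "D \<in> carrier G" using c by (auto simp: central_def)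
  have "C \<otimes> D \<otimes> y = y \<otimes> (C \<otimes> D)" if y: "y \<in> carrier G" for y
  proof -
    have "C \<otimes> D \<otimes> y = C \<otimes> (D \<otimes> y)" using CD y by (simp add: m_assoc)
    also have "\<dots> = C \<otimes> (y \<otimes> D)" using c y by (simp add: central_def)
    also have "\<dots> = (C \<otimes> y) \<otimes> D" using CD y by (simp add: m_assoc)
    also have "\<dots> = (y \<otimes> C) \<otimes> D" using c y by (simp add: central_def)
    also have "\<dots> = y \<otimes> (C \<otimes> D)" using CD y by (simp add: m_assoc)
    finally show ?thesis .
  qed
  then show ?thesis using CD by (simp add: central_def)
qed

lemma comm_inv: "a \<in> carrier G \<Longrightarrow> b \<in> carrier G \<Longrightarrow> a \<otimes> b = b \<otimes> a \<Longrightarrow> a \<otimes> inv b = inv b \<otimes> a"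
proof -
  assume a: "a \<in> carrier G" "b \<in> carrier G" "a \<otimes> b = b \<otimes> a"
  have "a \<otimes> inv b = inv b \<otimes> (b \<otimes> (a \<otimes> inv b))" using a(1,2) by (simp add: cancel_l2)
  also have "\<dots> = inv b \<otimes> ((b \<otimes> a) \<otimes> inv b)" using a(1,2) by (simp add: m_assoc)
  also have "\<dots> = inv b \<otimes> ((a \<otimes> b) \<otimes> inv b)" using a by simp
  also have "\<dots> = inv b \<otimes> a" using a(1,2) by (simp add: m_assoc)
  finally show ?thesis .
qed

lemma central_inv: "central G C \<Longrightarrow> central G (inv C)"
proof -
  assume c: "central G C"
  have C: "C \<in> carrier G" using c by (simp add: central_def)
  have "inv C \<otimes> y = y \<otimes> inv C" if y: "y \<in> carrier G" for y
  proof -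
    have "y \<otimes> C = C \<otimes> y" using c y by (simp add: central_def)
    then show ?thesis using comm_inv[OF y C] by simp
  qed
  then show ?thesis using C by (simp add: central_def)
qed

lemma comm_mult: "a \<in> carrier G \<Longrightarrow> b \<in> carrier G \<Longrightarrow> c \<in> carrier G \<Longrightarrow> a \<otimes> b = b \<otimes> a \<Longrightarrow> a \<otimes> c = c \<otimes> a
   \<Longrightarrow> a \<otimes> (b \<otimes> c) = (b \<otimes> c) \<otimes> a"
proof -
  assume a: "a \<in> carrier G" "b \<in> carrier G" "c \<in> carrier G" "a \<otimes> b = b \<otimes> a" "a \<otimes> c = c \<otimes> a"
  have "a \<otimes> (b \<otimes> c) = (a \<otimes> b) \<otimes> c" using a(1-3) by (simp add: m_assoc)
  also have "\<dots> = (b \<otimes> a) \<otimes> c" using a by simp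
  also have "\<dots> = b \<otimes> (a \<otimes> c)" using a(1-3) by (simp add: m_assoc)
  also have "\<dots> = b \<otimes> (c \<otimes> a)" using a by simp
  also have "\<dots> = (b \<otimes> c) \<otimes> a" using a(1-3) by (simp add: m_assoc)
  finally show ?thesis .
qed

lemma central_conj: "central G Z \<Longrightarrow> x \<in> carrier G \<Longrightarrow> inv x \<otimes> Z \<otimes> x = Z"
  unfolding central_def by (simp add: m_assoc cancel_l2)


lemma central_swap: "central G C \<Longrightarrow> y \<in> carrier G \<Longrightarrow> z \<in> carrier G \<Longrightarrow> C \<otimes> (y \<otimes> z) = y \<otimes> (C \<otimes> z)"
proof -
  assume a: "central G C" "y \<in> carrier G" "z \<in> carrier G"
  have C: "C \<in> carrier G" "C \<otimes> y = y \<otimes> C" using a by (auto simp: central_def)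
  have "C \<otimes> (y \<otimes> z) = (C \<otimes> y) \<otimes> z" using a(2,3) C(1) by (simp add: m_assoc)
  also have "\<dots> = (y \<otimes> C) \<otimes> z" using C by simp
  also have "\<dots> = y \<otimes> (C \<otimes> z)" using a(2,3) C(1) by (simp add: m_assoc)
  finally show ?thesis .
qed

lemma comm_left:
  assumes "a \<in> carrier G" "y \<in> carrier G" "central G C"
  shows "(a \<otimes> C) \<otimes> y \<otimes> inv (a \<otimes> C) \<otimes> inv y = a \<otimes> y \<otimes> inv a \<otimes> inv y"
proof -
  have C: "C \<in> carrier G" using assms(3) by (simp add: central_def)
  have "(a \<otimes> C) \<otimes> y \<otimes> inv (a \<otimes> C) \<otimes> inv y = a \<otimes> (C \<otimes> (y \<otimes> (inv C \<otimes> (inv a \<otimes> inv y))))"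
    using assms C by (simp add: inv_mult_group m_assoc)
  also have "\<dots> = a \<otimes> (y \<otimes> (C \<otimes> (inv C \<otimes> (inv a \<otimes> inv y))))"
    using central_swap[OF assms(3) assms(2), of "inv C \<otimes> (inv a \<otimes> inv y)"] assms C by simp
  also have "\<dots> = a \<otimes> (y \<otimes> (inv a \<otimes> inv y))"
    using assms C by (simp add: cancel_l)
  finally show ?thesis using assms by (simp add: m_assoc)
qed

lemma comm_right:
  assumes "x \<in> carrier G" "b \<in> carrier G" "central G D"
  shows "x \<otimes> (b \<otimes> D) \<otimes> inv x \<otimes> inv (b \<otimes> D) = x \<otimes> b \<otimes> inv x \<otimes> inv b"
proof -
  have D: "D \<in> carrier G" using assms(3) by (simp add: central_def)
  have "x \<otimes> (b \<otimes> D) \<otimes> inv x \<otimes> inv (b \<otimes> D) = x \<otimes> (b \<otimes> (D \<otimes> (inv x \<otimes> (inv D \<otimes> inv b))))"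
    using assms D by (simp add: inv_mult_group m_assoc)
  also have "\<dots> = x \<otimes> (b \<otimes> (inv x \<otimes> (D \<otimes> (inv D \<otimes> inv b))))"
    using central_swap[OF assms(3), of "inv x" "inv D \<otimes> inv b"] assms D by simp
  also have "\<dots> = x \<otimes> (b \<otimes> (inv x \<otimes> inv b))"
    using assms D by (simp add: cancel_l)
  finally show ?thesis using assms by (simp add: m_assoc)
qed

lemma commutator_central:
  assumes "a \<in> carrier G" "b \<in> carrier G" "central G C" "central G D"
  shows "(a \<otimes> C) \<otimes> (b \<otimes> D) \<otimes> inv (a \<otimes> C) \<otimes> inv (b \<otimes> D) = a \<otimes> b \<otimes> inv a \<otimes> inv b"
proof -
  have C: "C \<in> carrier G" "D \<in> carrier G" using assms(3,4) by (auto simp: central_def)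
  show ?thesis using comm_left[OF assms(1) _ assms(3), of "b \<otimes> D"] comm_right[OF assms(1,2,4)] assms C by simp
qed

lemma conj_central:
  assumes "E \<in> carrier G" "F \<in> carrier G" "M \<in> carrier G" "inv F \<otimes> M \<otimes> F = inv E \<otimes> M \<otimes> E"
  shows "(E \<otimes> inv F) \<otimes> M = M \<otimes> (E \<otimes> inv F)"
proof -
  have 1: "E \<otimes> (inv F \<otimes> M \<otimes> F) \<otimes> inv F = (E \<otimes> inv F) \<otimes> M" using assms(1-3) by (simp add: m_assoc)
  have 2: "E \<otimes> (inv E \<otimes> M \<otimes> E) \<otimes> inv F = M \<otimes> (E \<otimes> inv F)" using assms(1-3) by (simp add: m_assoc cancel_l)
  show ?thesis using 1 2 assms(4) by simp
qed

lemma central_step: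
  assumes "p \<in> carrier G" "q \<in> carrier G" "s \<in> carrier G" "t \<in> carrier G"
    "central G (inv p \<otimes> s)" "central G (inv q \<otimes> t)"
  shows "central G (inv (p \<otimes> q) \<otimes> (s \<otimes> t))"
proof -
  have "inv (p \<otimes> q) \<otimes> (s \<otimes> t) = inv q \<otimes> (inv p \<otimes> s) \<otimes> t"
    using assms(1-4) by (simp add: inv_mult_group m_assoc)
  also have "\<dots> = (inv p \<otimes> s) \<otimes> (inv q \<otimes> t)"
    using assms by (simp add: central_def m_assoc[symmetric])
  finally show ?thesis using assms central_mult by simp
qed

end


definition f0 :: "'a \<times> bool \<Rightarrow> 'a \<times> bool" where "f0 p = (fst p, False)"
definition iota :: "'a \<Rightarrow> 'a \<times> bool" where "iota x = (x, False)"

lemma map_lmap: "map (\<lambda>(p, e). (g p, e)) w = lmap g w" by (induction w) auto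

lemma rclosed_T: "rclosed (UNIV :: bool set) triv_op" by unfold_locales simp

context rclosed
begin

lemma Y_closed: "rclosed (S \<times> (UNIV :: bool set)) (prod_op rop triv_op)"
  by unfold_locales (auto simp: prod_op_def closed)

interpretation Yc: rclosed "S \<times> (UNIV :: bool set)" "prod_op rop triv_op" by (rule Y_closed)
interpretation Tc: rclosed "UNIV :: bool set" triv_op by (rule rclosed_T)

abbreviation "Y \<equiv> S \<times> (UNIV :: bool set)"
abbreviation "ropY \<equiv> prod_op rop triv_op"
abbreviation "GY \<equiv> structure_group Y ropY"

lemma f0_Y: "f0 ` Y \<subseteq> Y" by (auto simp: f0_def)
lemma f0_hom: "p \<in> Y \<Longrightarrow> q \<in> Y \<Longrightarrow> f0 (ropY p q) = ropY (f0 p) (f0 q)"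
  by (simp add: f0_def prod_op_def triv_op_def)
lemma iota_Y: "iota ` S \<subseteq> Y" by (auto simp: iota_def)
lemma iota_hom: "x \<in> S \<Longrightarrow> y \<in> S \<Longrightarrow> iota (rop x y) = ropY (iota x) (iota y)"
  by (simp add: iota_def prod_op_def triv_op_def)
lemma fst_Y: "fst ` Y \<subseteq> S" by auto
lemma fst_hom: "p \<in> Y \<Longrightarrow> q \<in> Y \<Longrightarrow> fst (ropY p q) = rop (fst p) (fst q)"
  by (simp add: prod_op_def)
lemma snd_Y: "snd ` Y \<subseteq> UNIV" by auto
lemma snd_hom: "p \<in> Y \<Longrightarrow> q \<in> Y \<Longrightarrow> snd (ropY p q) = triv_op (snd p) (snd q)"
  by (simp add: prod_op_def)

lemma f0_rel: "Yc.R v w \<Longrightarrow> Yc.R (lmap f0 v) (lmap f0 w)"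
  by (erule sg_rel_morph) (auto simp: f0_def prod_op_def triv_op_def)
lemma fst_rel: "Yc.R v w \<Longrightarrow> R (lmap fst v) (lmap fst w)"
  by (erule sg_rel_morph) (auto simp: prod_op_def)
lemma snd_rel: "Yc.R v w \<Longrightarrow> Tc.R (lmap snd v) (lmap snd w)"
  by (erule sg_rel_morph) (auto simp: prod_op_def)
lemma iota_rel: "R v w \<Longrightarrow> Yc.R (lmap iota v) (lmap iota w)"
  by (erule sg_rel_morph) (auto simp: iota_def prod_op_def triv_op_def)

lemma f0_words: "a \<in> words Y \<Longrightarrow> lmap f0 a \<in> words Y" using lmap_words[OF f0_Y] .

definition rr :: "(('a \<times> bool) \<times> bool) list set \<Rightarrow> (('a \<times> bool) \<times> bool) list set" where
  "rr A = {v. \<exists>a\<in>A. Yc.R (lmap f0 a) v}"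

lemma rr_cls: "a \<in> words Y \<Longrightarrow> rr (Yc.cls a) = Yc.cls (lmap f0 a)"
proof (rule equalityI; rule subsetI)
  fix v assume a: "a \<in> words Y" and "v \<in> rr (Yc.cls a)"
  then obtain a' where a': "a' \<in> Yc.cls a" "Yc.R (lmap f0 a') v" unfolding rr_def by blast
  from a'(1) have "Yc.R a a'" unfolding sg_class_def by simp
  note a'(2)
  moreover have "Yc.R (lmap f0 a) (lmap f0 a')" using f0_rel[OF \<open>Yc.R a a'\<close>] .
  ultimately have "Yc.R (lmap f0 a) v" by (blast intro: sg_rel.sg_trans)
  then show "v \<in> Yc.cls (lmap f0 a)" by (simp add: sg_class_def)
next
  fix v assume a: "a \<in> words Y" and "v \<in> Yc.cls (lmap f0 a)"
  then show "v \<in> rr (Yc.cls a)" using Yc.cls_mem[OF a] by (auto simp: rr_def sg_class_def)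
qed

lemma carrier_cases: "A \<in> carrier GY \<Longrightarrow> (\<And>a. a \<in> words Y \<Longrightarrow> A = Yc.cls a \<Longrightarrow> P) \<Longrightarrow> P"
  using Yc.carrier_GG by auto

lemma cls_carrier: "a \<in> words Y \<Longrightarrow> Yc.cls a \<in> carrier GY"
  using Yc.carrier_GG by auto

lemma rr_carrier: "A \<in> carrier GY \<Longrightarrow> rr A \<in> carrier GY"
  by (erule carrier_cases) (simp add: rr_cls cls_carrier f0_words)

lemma rr_mult: "A \<in> carrier GY \<Longrightarrow> B \<in> carrier GY \<Longrightarrow> rr (A \<otimes>\<^bsub>GY\<^esub> B) = rr A \<otimes>\<^bsub>GY\<^esub> rr B"
  by (erule carrier_cases, erule carrier_cases) (simp add: rr_cls Yc.mult_cls f0_words)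

lemma rr_inv: "A \<in> carrier GY \<Longrightarrow> rr (inv\<^bsub>GY\<^esub> A) = inv\<^bsub>GY\<^esub> (rr A)"
  by (erule carrier_cases) (simp add: rr_cls Yc.inv_cls f0_words)

lemma rr_one: "rr \<one>\<^bsub>GY\<^esub> = \<one>\<^bsub>GY\<^esub>"
  by (simp add: Yc.one_GG rr_cls)

lemma conj_letter:
  assumes "p \<in> Y" "q \<in> Y"
  shows "inv\<^bsub>GY\<^esub> (Yc.cls [(q, True)]) \<otimes>\<^bsub>GY\<^esub> Yc.cls [(p, True)] \<otimes>\<^bsub>GY\<^esub> Yc.cls [(q, True)]
     = Yc.cls [(ropY p q, True)]"
proof -
  have "Yc.R ([] @ [(q, False), (p, True), (q, True)] @ []) ([] @ [(ropY p q, True)] @ [])"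
    using assms by (intro sg_rel.sg_rack) auto
  then show ?thesis using assms
    by (simp add: Yc.inv_cls Yc.mult_cls Yc.cls_eq)
qed

abbreviation "EE x \<equiv> Yc.cls [((x, False), True)]"
abbreviation "FF x \<equiv> Yc.cls [((x, True), True)]"

lemma conj_EF: "x \<in> S \<Longrightarrow> p \<in> Y \<Longrightarrow>
  inv\<^bsub>GY\<^esub> (FF x) \<otimes>\<^bsub>GY\<^esub> Yc.cls [(p, True)] \<otimes>\<^bsub>GY\<^esub> FF x =
  inv\<^bsub>GY\<^esub> (EE x) \<otimes>\<^bsub>GY\<^esub> Yc.cls [(p, True)] \<otimes>\<^bsub>GY\<^esub> EE x"
  by (simp add: conj_letter prod_op_def triv_op_def)

lemma Z1_comm:
  assumes x: "x \<in> S"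
  shows "w \<in> words Y \<Longrightarrow> (EE x \<otimes>\<^bsub>GY\<^esub> inv\<^bsub>GY\<^esub> (FF x)) \<otimes>\<^bsub>GY\<^esub> Yc.cls w = Yc.cls w \<otimes>\<^bsub>GY\<^esub> (EE x \<otimes>\<^bsub>GY\<^esub> inv\<^bsub>GY\<^esub> (FF x))"
proof (induction w)
  case Nil
  interpret G: group GY by (rule Yc.group_GG)
  have "EE x \<in> carrier GY" "FF x \<in> carrier GY" using x by (auto intro: cls_carrier)
  then show ?case by (simp add: Yc.one_GG[symmetric])
next
  case (Cons l w)
  interpret G: group GY by (rule Yc.group_GG)
  obtain p d where l: "l = (p, d)" by (cases l)
  have p: "p \<in> Y" using Cons l by auto
  have EF: "EE x \<in> carrier GY" "FF x \<in> carrier GY" using x by (auto intro: cls_carrier)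
  have w: "w \<in> words Y" "Yc.cls w \<in> carrier GY" using Cons by (auto intro: cls_carrier)
  have split: "Yc.cls (l # w) = Yc.cls [l] \<otimes>\<^bsub>GY\<^esub> Yc.cls w"
    using Cons Yc.mult_cls[of "[l]" w] by simp
  have P: "Yc.cls [(p, True)] \<in> carrier GY" using p by (auto intro: cls_carrier)
  have c1: "(EE x \<otimes>\<^bsub>GY\<^esub> inv\<^bsub>GY\<^esub> (FF x)) \<otimes>\<^bsub>GY\<^esub> Yc.cls [(p, True)] = Yc.cls [(p, True)] \<otimes>\<^bsub>GY\<^esub> (EE x \<otimes>\<^bsub>GY\<^esub> inv\<^bsub>GY\<^esub> (FF x))"
    by (rule G.conj_central[OF EF(1) EF(2) P conj_EF[OF x p]])
  have c2: "(EE x \<otimes>\<^bsub>GY\<^esub> inv\<^bsub>GY\<^esub> (FF x)) \<otimes>\<^bsub>GY\<^esub> Yc.cls [l] = Yc.cls [l] \<otimes>\<^bsub>GY\<^esub> (EE x \<otimes>\<^bsub>GY\<^esub> inv\<^bsub>GY\<^esub> (FF x))"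
  proof (cases d)
    case True then show ?thesis using c1 l by simp
  next
    case False
    have "Yc.cls [l] = inv\<^bsub>GY\<^esub> (Yc.cls [(p, True)])" using l False p by (simp add: Yc.inv_cls)
    then show ?thesis using G.comm_inv[OF _ P c1] EF by simp
  qed
  show ?case unfolding split
    using G.comm_mult[OF _ _ w(2) c2 Cons.IH[OF w(1)]] EF p l by (simp add: cls_carrier)
qed

lemma central_EF:
  assumes x: "x \<in> S"
  shows "central GY (EE x \<otimes>\<^bsub>GY\<^esub> inv\<^bsub>GY\<^esub> (FF x))" "central GY (inv\<^bsub>GY\<^esub> (EE x) \<otimes>\<^bsub>GY\<^esub> FF x)"
proof -
  interpret G: group GY by (rule Yc.group_GG)
  have EF: "EE x \<in> carrier GY" "FF x \<in> carrier GY" using x by (auto intro: cls_carrier)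
  have mem: "EE x \<otimes>\<^bsub>GY\<^esub> inv\<^bsub>GY\<^esub> (FF x) \<in> carrier GY" using EF by simp
  show c: "central GY (EE x \<otimes>\<^bsub>GY\<^esub> inv\<^bsub>GY\<^esub> (FF x))"
    unfolding central_def
  proof (intro conjI ballI mem)
    fix y assume "y \<in> carrier GY"
    then obtain w where "w \<in> words Y" "y = Yc.cls w" by (rule carrier_cases)
    then show "EE x \<otimes>\<^bsub>GY\<^esub> inv\<^bsub>GY\<^esub> FF x \<otimes>\<^bsub>GY\<^esub> y = y \<otimes>\<^bsub>GY\<^esub> (EE x \<otimes>\<^bsub>GY\<^esub> inv\<^bsub>GY\<^esub> FF x)"
      using Z1_comm[OF x] by simp
  qed
  have "inv\<^bsub>GY\<^esub> (EE x \<otimes>\<^bsub>GY\<^esub> inv\<^bsub>GY\<^esub> (FF x)) = FF x \<otimes>\<^bsub>GY\<^esub> inv\<^bsub>GY\<^esub> (EE x)"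
    using EF by (simp add: G.inv_mult_group)
  then have c2: "central GY (FF x \<otimes>\<^bsub>GY\<^esub> inv\<^bsub>GY\<^esub> (EE x))" using G.central_inv[OF c] by simp
  have "inv\<^bsub>GY\<^esub> (EE x) \<otimes>\<^bsub>GY\<^esub> FF x = inv\<^bsub>GY\<^esub> (EE x) \<otimes>\<^bsub>GY\<^esub> (FF x \<otimes>\<^bsub>GY\<^esub> inv\<^bsub>GY\<^esub> (EE x)) \<otimes>\<^bsub>GY\<^esub> EE x"
    using EF by (simp add: G.m_assoc)
  also have "\<dots> = FF x \<otimes>\<^bsub>GY\<^esub> inv\<^bsub>GY\<^esub> (EE x)" using G.central_conj[OF c2 EF(1)] .
  finally show "central GY (inv\<^bsub>GY\<^esub> (EE x) \<otimes>\<^bsub>GY\<^esub> FF x)" using c2 by simp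
qed

lemma central_letter:
  assumes "fst l \<in> Y"
  shows "central GY (inv\<^bsub>GY\<^esub> (rr (Yc.cls [l])) \<otimes>\<^bsub>GY\<^esub> Yc.cls [l])"
proof -
  interpret G: group GY by (rule Yc.group_GG)
  obtain x a e where l: "l = ((x, a), e)" by (metis prod.collapse)
  have x: "x \<in> S" using assms l by auto
  have EF: "EE x \<in> carrier GY" "FF x \<in> carrier GY" using x by (auto intro: cls_carrier)
  have rl: "rr (Yc.cls [l]) = Yc.cls [((x, False), e)]" using assms l by (simp add: rr_cls f0_def)
  show ?thesis
  proof (cases a)
    case False
    then have "inv\<^bsub>GY\<^esub> (rr (Yc.cls [l])) \<otimes>\<^bsub>GY\<^esub> Yc.cls [l] = \<one>\<^bsub>GY\<^esub>"
      using rl l x by (simp add: cls_carrier)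
    then show ?thesis by (simp add: G.central_one)
  next
    case True
    show ?thesis
    proof (cases e)
      case True
      then show ?thesis using rl l \<open>a\<close> central_EF(2)[OF x] by simp
    next
      case False
      have "Yc.cls [((x, False), e)] = inv\<^bsub>GY\<^esub> (EE x)" "Yc.cls [l] = inv\<^bsub>GY\<^esub> (FF x)"
        using False l \<open>a\<close> x by (simp_all add: Yc.inv_cls)
      then show ?thesis using rl central_EF(1)[OF x] EF by simp
    qed
  qed
qed

lemma central_word: "a \<in> words Y \<Longrightarrow> central GY (inv\<^bsub>GY\<^esub> (rr (Yc.cls a)) \<otimes>\<^bsub>GY\<^esub> Yc.cls a)"
proof (induction a)
  case Nil
  interpret G: group GY by (rule Yc.group_GG)
  show ?case using rr_one by (simp add: Yc.one_GG[symmetric] G.central_one)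
next
  case (Cons l a)
  interpret G: group GY by (rule Yc.group_GG)
  have w: "[l] \<in> words Y" "a \<in> words Y" using Cons by auto
  have split: "Yc.cls (l # a) = Yc.cls [l] \<otimes>\<^bsub>GY\<^esub> Yc.cls a"
    using w Yc.mult_cls[of "[l]" a] by simp
  have cl: "Yc.cls [l] \<in> carrier GY" "Yc.cls a \<in> carrier GY" using w by (auto intro: cls_carrier)
  show ?case unfolding split rr_mult[OF cl]
    by (rule G.central_step[OF rr_carrier[OF cl(1)] rr_carrier[OF cl(2)] cl central_letter Cons.IH[OF w(2)]])
      (use w in auto)
qed

lemma rr_comm:
  assumes "A \<in> carrier GY" "B \<in> carrier GY"
  shows "rr (A \<otimes>\<^bsub>GY\<^esub> B \<otimes>\<^bsub>GY\<^esub> inv\<^bsub>GY\<^esub> A \<otimes>\<^bsub>GY\<^esub> inv\<^bsub>GY\<^esub> B) = A \<otimes>\<^bsub>GY\<^esub> B \<otimes>\<^bsub>GY\<^esub> inv\<^bsub>GY\<^esub> A \<otimes>\<^bsub>GY\<^esub> inv\<^bsub>GY\<^esub> B"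
proof -
  interpret G: group GY by (rule Yc.group_GG)
  have cA: "central GY (inv\<^bsub>GY\<^esub> (rr A) \<otimes>\<^bsub>GY\<^esub> A)" using assms(1) by (rule carrier_cases) (simp add: central_word)
  have cB: "central GY (inv\<^bsub>GY\<^esub> (rr B) \<otimes>\<^bsub>GY\<^esub> B)" using assms(2) by (rule carrier_cases) (simp add: central_word)
  have rA: "rr A \<in> carrier GY" "rr B \<in> carrier GY" using assms by (auto intro: rr_carrier)
  have eA: "A = rr A \<otimes>\<^bsub>GY\<^esub> (inv\<^bsub>GY\<^esub> (rr A) \<otimes>\<^bsub>GY\<^esub> A)" using assms rA by (simp add: G.cancel_l)
  have eB: "B = rr B \<otimes>\<^bsub>GY\<^esub> (inv\<^bsub>GY\<^esub> (rr B) \<otimes>\<^bsub>GY\<^esub> B)" using assms rA by (simp add: G.cancel_l)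
  have "rr (A \<otimes>\<^bsub>GY\<^esub> B \<otimes>\<^bsub>GY\<^esub> inv\<^bsub>GY\<^esub> A \<otimes>\<^bsub>GY\<^esub> inv\<^bsub>GY\<^esub> B) = rr A \<otimes>\<^bsub>GY\<^esub> rr B \<otimes>\<^bsub>GY\<^esub> inv\<^bsub>GY\<^esub> (rr A) \<otimes>\<^bsub>GY\<^esub> inv\<^bsub>GY\<^esub> (rr B)"
    using assms by (simp add: rr_mult rr_inv)
  also have "\<dots> = (rr A \<otimes>\<^bsub>GY\<^esub> (inv\<^bsub>GY\<^esub> (rr A) \<otimes>\<^bsub>GY\<^esub> A)) \<otimes>\<^bsub>GY\<^esub> (rr B \<otimes>\<^bsub>GY\<^esub> (inv\<^bsub>GY\<^esub> (rr B) \<otimes>\<^bsub>GY\<^esub> B))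
     \<otimes>\<^bsub>GY\<^esub> inv\<^bsub>GY\<^esub> (rr A \<otimes>\<^bsub>GY\<^esub> (inv\<^bsub>GY\<^esub> (rr A) \<otimes>\<^bsub>GY\<^esub> A)) \<otimes>\<^bsub>GY\<^esub> inv\<^bsub>GY\<^esub> (rr B \<otimes>\<^bsub>GY\<^esub> (inv\<^bsub>GY\<^esub> (rr B) \<otimes>\<^bsub>GY\<^esub> B))"
    using G.commutator_central[OF rA cA cB] by simp
  also have "\<dots> = A \<otimes>\<^bsub>GY\<^esub> B \<otimes>\<^bsub>GY\<^esub> inv\<^bsub>GY\<^esub> A \<otimes>\<^bsub>GY\<^esub> inv\<^bsub>GY\<^esub> B"
    using eA eB by simp
  finally show ?thesis .
qed

lemma derived_fix:
  assumes "A \<in> derived GY (carrier GY)"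
  shows "A \<in> carrier GY \<and> rr A = A"
  using assms unfolding derived_def
proof (induction rule: generate.induct)
  case one
  interpret G: group GY by (rule Yc.group_GG)
  show ?case by (simp add: rr_one)
next
  case (incl h)
  interpret G: group GY by (rule Yc.group_GG)
  from incl obtain A B where AB: "A \<in> carrier GY" "B \<in> carrier GY"
    "h = A \<otimes>\<^bsub>GY\<^esub> B \<otimes>\<^bsub>GY\<^esub> inv\<^bsub>GY\<^esub> A \<otimes>\<^bsub>GY\<^esub> inv\<^bsub>GY\<^esub> B" by blast
  then show ?case using rr_comm[OF AB(1,2)] by simp
next
  case (inv h)
  interpret G: group GY by (rule Yc.group_GG)
  from inv obtain A B where AB: "A \<in> carrier GY" "B \<in> carrier GY"
    "h = A \<otimes>\<^bsub>GY\<^esub> B \<otimes>\<^bsub>GY\<^esub> inv\<^bsub>GY\<^esub> A \<otimes>\<^bsub>GY\<^esub> inv\<^bsub>GY\<^esub> B" by blast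
  then have h: "h \<in> carrier GY" "rr h = h" using rr_comm[OF AB(1,2)] by simp_all
  then show ?case using rr_inv[OF h(1)] by simp
next
  case (eng h1 h2)
  interpret G: group GY by (rule Yc.group_GG)
  show ?case using eng rr_mult by simp
qed

lemma natural_map_cls:
  assumes a: "a \<in> words Y"
  shows "natural_map S rop UNIV triv_op (Yc.cls a) = (cls (lmap fst a), Tc.cls (lmap snd a))"
proof -
  let ?f = "\<lambda>w. (cls (lmap fst w), Tc.cls (lmap snd w))"
  have "?f ` Yc.cls a = {?f a}"
  proof (rule equalityI; rule subsetI)
    fix z assume "z \<in> ?f ` Yc.cls a"
    then obtain v where v: "Yc.R a v" "z = ?f v" by (auto simp: sg_class_def)
    have "R (lmap fst a) (lmap fst v)" using fst_rel[OF v(1)] .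
    moreover have "Tc.R (lmap snd a) (lmap snd v)" using snd_rel[OF v(1)] .
    moreover have "lmap fst a \<in> words S" "lmap snd a \<in> words UNIV" using a lmap_words[OF fst_Y] lmap_words[OF snd_Y] by auto
    ultimately have "cls (lmap fst a) = cls (lmap fst v)" "Tc.cls (lmap snd a) = Tc.cls (lmap snd v)"
      using cls_eq Tc.cls_eq by simp_all
    then show "z \<in> {?f a}" using v(2) by simp
  next
    fix z assume "z \<in> {?f a}"
    then show "z \<in> ?f ` Yc.cls a" using Yc.cls_mem[OF a] by auto
  qed
  then show ?thesis unfolding natural_map_def map_lmap by simp
qed

lemma main_inj:
  "inj_on (natural_map S rop UNIV triv_op) (derived GY (carrier GY))"
proof (rule inj_onI)
  fix A B assume A: "A \<in> derived GY (carrier GY)" and B: "B \<in> derived GY (carrier GY)"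
    and eq: "natural_map S rop UNIV triv_op A = natural_map S rop UNIV triv_op B"
  have fA: "A \<in> carrier GY" "rr A = A" using derived_fix[OF A] by auto
  have fB: "B \<in> carrier GY" "rr B = B" using derived_fix[OF B] by auto
  obtain a where a: "a \<in> words Y" "A = Yc.cls a" using fA(1) by (rule carrier_cases)
  obtain b where b: "b \<in> words Y" "B = Yc.cls b" using fB(1) by (rule carrier_cases)
  have "cls (lmap fst a) = cls (lmap fst b)" using eq a b natural_map_cls by simp
  moreover have "lmap fst a \<in> words S" using a lmap_words[OF fst_Y] by auto
  ultimately have "R (lmap fst a) (lmap fst b)" using cls_eq by simp
  then have "Yc.R (lmap iota (lmap fst a)) (lmap iota (lmap fst b))"
    by (rule iota_rel)
  moreover have f0eq: "iota \<circ> fst = f0" by (auto simp: iota_def f0_def)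
  ultimately have "Yc.R (lmap f0 a) (lmap f0 b)" by (simp add: lmap_comp f0eq)
  then have "rr A = rr B" using a b f0_words by (simp add: rr_cls Yc.cls_eq)
  then show "A = B" using fA fB by simp
qed

end


theorem proposition4p26:
  fixes S :: "'a set" and rop :: "'a \<Rightarrow> 'a \<Rightarrow> 'a"
  assumes "is_rack S rop"
  shows "inj_on (natural_map S rop (UNIV :: bool set) triv_op)
           (derived (structure_group (S \<times> (UNIV :: bool set)) (prod_op rop triv_op))
                    (carrier (structure_group (S \<times> (UNIV :: bool set)) (prod_op rop triv_op))))"
proof -
  have "rclosed S rop" using assms unfolding rclosed_def is_rack_def by blast
  then show ?thesis by (rule rclosed.main_inj)
qed

end
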